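(* Let $\lambda,\nu$ be partitions with $\nu$ obtained from $\lambda$ by adding one cell. Then \[ \lim_{q\to1}\alpha_{\nu/\lambda}(q,q)=\lim_{q\to1}\overline{\alpha}_{\nu/\lambda}(q,q)=\frac{H_\lambda}{H_\nu}, \] where $H_\kappa=\prod_{c\in\kappa}h_\kappa(c)$ is the product of hook-lengths.
   Context: Partitions are Young diagrams in French convention (cells $(x,y)\in\mathbb{Z}_{>0}^2$, $x\le\lambda_y$), $\lambda'$ the conjugate; for $c=(x,y)\in\lambda$, $a_\lambda(c)=\lambda_y-x$, $\ell_\lambda(c)=\lambda'_x-y$, $h_\lambda(c)=a_\lambda(c)+\ell_\lambda(c)+1$. For $\lambda\subseteq\nu$, $\mathcal{R}_{\nu/\lambda}$ (resp. $\mathcal{C}_{\nu/\lambda}$) is the set of cells of $\lambda$ in a row (resp. column) containing a cell of $\nu/\lambda$. With $[i,j]=1-q^it^j$: $\alpha_{\nu/\lambda}(q,t)=\prod_{c\in\mathcal{R}_{\nu/\lambda}}\frac{[a_\lambda(c),\ell_\lambda(c)+1]}{[a_\nu(c),\ell_\nu(c)+1]}\prod_{c\in\mathcal{C}_{\nu/\lambda}}\frac{[a_\lambda(c)+1,\ell_\lambda(c)]}{[a_\nu(c)+1,\ell_\nu(c)]}$, $\overline{\alpha}_{\nu/\lambda}(q,t)=\prod_{c\in\mathcal{R}_{\nu/\lambda}}\frac{[a_\lambda(c)+1,\ell_\lambda(c)]}{[a_\nu(c)+1,\ell_\nu(c)]}\prod_{c\in\mathcal{C}_{\nu/\lambda}}\frac{[a_\lambda(c),\ell_\lambda(c)+1]}{[a_\nu(c),\ell_\nu(c)+1]}$.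 *)

theory Defs
  imports Complex_Main
begin

text \<open>Partitions as weakly decreasing lists of positive naturals
  (lambda_1 >= lambda_2 >= ... > 0). Cells in French convention: (x,y) with
  x,y >= 1 and x <= lambda_y.\<close>

definition is_partition :: "nat list \<Rightarrow> bool" where
  "is_partition la \<longleftrightarrow> sorted_wrt (\<ge>) la \<and> 0 \<notin> set la"

definition prow :: "nat list \<Rightarrow> nat \<Rightarrow> nat" where
  "prow la y = (if 1 \<le> y \<and> y \<le> length la then la ! (y - 1) else 0)"

definition pcol :: "nat list \<Rightarrow> nat \<Rightarrow> nat" where
  "pcol la x = card {y. 1 \<le> y \<and> y \<le> length la \<and> x \<le> prow la y}"

definition cells :: "nat list \<Rightarrow> (nat \<times> nat) set" where
  "cells la = {(x, y). 1 \<le> x \<and> 1 \<le> y \<and> x \<le> prow la y}"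

definition arm :: "nat list \<Rightarrow> nat \<times> nat \<Rightarrow> nat" where
  "arm la c = prow la (snd c) - fst c"

definition leg :: "nat list \<Rightarrow> nat \<times> nat \<Rightarrow> nat" where
  "leg la c = pcol la (fst c) - snd c"

definition hook :: "nat list \<Rightarrow> nat \<times> nat \<Rightarrow> nat" where
  "hook la c = arm la c + leg la c + 1"

definition hook_prod :: "nat list \<Rightarrow> nat" where
  "hook_prod la = (\<Prod>c\<in>cells la. hook la c)"

definition brk :: "real \<Rightarrow> real \<Rightarrow> nat \<Rightarrow> nat \<Rightarrow> real" where
  "brk q t i j = 1 - q ^ i * t ^ j"

definition Rset :: "nat list \<Rightarrow> nat list \<Rightarrow> (nat \<times> nat) set" where
  "Rset la nu = {c \<in> cells la. \<exists>d \<in> cells nu - cells la. snd d = snd c}"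

definition Cset :: "nat list \<Rightarrow> nat list \<Rightarrow> (nat \<times> nat) set" where
  "Cset la nu = {c \<in> cells la. \<exists>d \<in> cells nu - cells la. fst d = fst c}"

definition alpha :: "nat list \<Rightarrow> nat list \<Rightarrow> real \<Rightarrow> real \<Rightarrow> real" where
  "alpha la nu q t =
     (\<Prod>c\<in>Rset la nu. brk q t (arm la c) (leg la c + 1) / brk q t (arm nu c) (leg nu c + 1)) *
     (\<Prod>c\<in>Cset la nu. brk q t (arm la c + 1) (leg la c) / brk q t (arm nu c + 1) (leg nu c))"

definition alphabar :: "nat list \<Rightarrow> nat list \<Rightarrow> real \<Rightarrow> real \<Rightarrow> real" where
  "alphabar la nu q t =
     (\<Prod>c\<in>Rset la nu. brk q t (arm la c + 1) (leg la c) / brk q t (arm nu c + 1) (leg nu c)) *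
     (\<Prod>c\<in>Cset la nu. brk q t (arm la c) (leg la c + 1) / brk q t (arm nu c) (leg nu c + 1))"

end

theory Submission
  imports Defs
begin

lemma ratio_lim:
  assumes "b > 0"
  shows "((\<lambda>q::real. (1 - q ^ a) / (1 - q ^ b)) \<longlongrightarrow> real a / real b) (at 1)"
proof -
  let ?g = "\<lambda>q::real. (\<Sum>i<a. q ^ i) / (\<Sum>i<b. q ^ i)"
  have "isCont ?g 1"
    using assms by (intro continuous_intros) auto
  then have "(?g \<longlongrightarrow> ?g 1) (at 1)" by (simp add: isCont_def)
  moreover have "?g 1 = real a / real b" by simp
  ultimately have lim: "(?g \<longlongrightarrow> real a / real b) (at 1)" by simp
  have ev: "eventually (\<lambda>q. ?g q = (1 - q ^ a) / (1 - q ^ b)) (at (1::real))"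
    unfolding eventually_at_filter
    by (intro always_eventually allI impI)
       (simp add: one_diff_power_eq[of _ a] one_diff_power_eq[of _ b])
  show ?thesis using tendsto_cong[OF ev] lim by simp
qed

lemma prow_antitone:
  assumes "is_partition la" "1 \<le> y" "y \<le> y'"
  shows "prow la y' \<le> prow la y"
proof (cases "y' \<le> length la")
  case True
  show ?thesis
  proof (cases "y = y'")
    case False
    then have "la ! (y - 1) \<ge> la ! (y' - 1)"
      using assms True sorted_wrt_nth_less[of "(\<ge>)" la "y - 1" "y' - 1"]
      unfolding is_partition_def by auto
    then show ?thesis using True assms unfolding prow_def by auto
  qed simp
next
  case False
  then show ?thesis unfolding prow_def by auto
qed

lemma finite_cells: "finite (cells la)"
proof -
  have "cells la \<subseteq> {0..sum_list la} \<times> {0..length la}"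
  proof
    fix c assume "c \<in> cells la"
    then obtain x y where c: "c = (x,y)" "1 \<le> x" "1 \<le> y" "x \<le> prow la y"
      unfolding cells_def by auto
    then have "y \<le> length la" unfolding prow_def by (auto split: if_splits)
    moreover have "x \<le> sum_list la"
    proof -
      have "la ! (y - 1) \<in> set la" using calculation c(3) by auto
      then have "la ! (y - 1) \<le> sum_list la" by (rule member_le_sum_list) auto
      then show ?thesis using c calculation unfolding prow_def by auto
    qed
    ultimately show "c \<in> {0..sum_list la} \<times> {0..length la}" using c by auto
  qed
  then show ?thesis by (rule finite_subset) auto
qed

lemma pcol_card:
  assumes "1 \<le> x"
  shows "pcol la x = card {y. (x, y) \<in> cells la}"
proof -
  have "{y. 1 \<le> y \<and> y \<le> length la \<and> x \<le> prow la y} = {y. (x, y) \<in> cells la}"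
    using assms unfolding cells_def prow_def by (auto split: if_splits)
  then show ?thesis unfolding pcol_def by simp
qed

lemma brkqq: "brk q q i j = 1 - q ^ (i + j)"
  unfolding brk_def by (simp add: power_add)

theorem lemma4p8:
  fixes la nu :: "nat list"
  assumes "is_partition la" and "is_partition nu"
    and "cells la \<subseteq> cells nu" and "card (cells nu - cells la) = 1"
  shows "((\<lambda>q. alpha la nu q q) \<longlongrightarrow> real (hook_prod la) / real (hook_prod nu)) (at (1::real))
     \<and> ((\<lambda>q. alphabar la nu q q) \<longlongrightarrow> real (hook_prod la) / real (hook_prod nu)) (at (1::real))"
proof -
  obtain d where D: "cells nu - cells la = {d}"
    using assms(4) by (auto simp: card_1_singleton_iff)
  have nuD: "cells nu = insert d (cells la)" and dnot: "d \<notin> cells la"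
    using D assms(3) by auto
  obtain x0 y0 where d: "d = (x0, y0)" by (cases d)
  have dcell: "1 \<le> x0" "1 \<le> y0" "x0 \<le> prow nu y0"
    using nuD d unfolding cells_def by auto
  have cnu: "(x, y) \<in> cells nu \<longleftrightarrow> (x, y) \<in> cells la" if "(x, y) \<noteq> d" for x y
    using nuD that by auto
  have R: "Rset la nu = {c \<in> cells la. snd c = y0}"
    unfolding Rset_def D d by auto
  have C: "Cset la nu = {c \<in> cells la. fst c = x0}"
    unfolding Cset_def D d by auto
  have disj: "Rset la nu \<inter> Cset la nu = {}"
    unfolding R C using dnot d by auto
  have fin: "finite (cells la)" by (rule finite_cells)
  have finR: "finite (Rset la nu)" "finite (Cset la nu)" unfolding R C using fin by auto
  have arm_eq: "arm nu c = arm la c" if "c \<in> cells la" "snd c \<noteq> y0" for c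
  proof -
    obtain x y where c: "c = (x, y)" by (cases c)
    have y1: "1 \<le> y" "1 \<le> prow la y" using that c unfolding cells_def by auto
    have "prow nu y = prow la y"
    proof (rule ccontr)
      assume ne: "prow nu y \<noteq> prow la y"
      let ?m = "max (prow nu y) (prow la y)"
      have "(?m, y) \<noteq> d" using that c d by auto
      show False
      proof (cases "prow nu y < prow la y")
        case True
        then have "(prow la y, y) \<in> cells la" "(prow la y, y) \<notin> cells nu"
          using y1 unfolding cells_def by auto
        then show False using cnu \<open>(?m, y) \<noteq> d\<close> True by (simp add: max_def)
      next
        case False
        then have lt: "prow la y < prow nu y" using ne by simp
        then have "(prow nu y, y) \<in> cells nu" "(prow nu y, y) \<notin> cells la"
          using y1 unfolding cells_def by auto
        then show False using cnu \<open>(?m, y) \<noteq> d\<close> lt by (simp add: max_def)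
      qed
    qed
    then show ?thesis unfolding arm_def c by simp
  qed
  have leg_eq: "leg nu c = leg la c" if "c \<in> cells la" "fst c \<noteq> x0" for c
  proof -
    obtain x y where c: "c = (x, y)" by (cases c)
    have x1: "1 \<le> x" using that c unfolding cells_def by auto
    have "{y. (x, y) \<in> cells nu} = {y. (x, y) \<in> cells la}"
      using cnu that c d by auto
    then have "pcol nu x = pcol la x" using pcol_card[OF x1] by metis
    then show ?thesis unfolding leg_def c by simp
  qed
  have arm_d: "arm nu d = 0"
  proof (rule ccontr)
    assume "arm nu d \<noteq> 0"
    then have gt: "prow nu y0 > x0" unfolding arm_def d by simp
    then have "(prow nu y0, y0) \<in> cells nu" using dcell unfolding cells_def by auto
    moreover have "(prow nu y0, y0) \<noteq> d" using gt d by auto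
    ultimately have "(prow nu y0, y0) \<in> cells la" using cnu by blast
    then have "(x0, y0) \<in> cells la" using gt dcell unfolding cells_def by auto
    then show False using dnot d by simp
  qed
  have leg_d: "leg nu d = 0"
  proof -
    have "{y. (x0, y) \<in> cells nu} \<subseteq> {1..y0}"
    proof
      fix y assume y: "y \<in> {y. (x0, y) \<in> cells nu}"
      show "y \<in> {1..y0}"
      proof (rule ccontr)
        assume "y \<notin> {1..y0}"
        moreover have "1 \<le> y" using y unfolding cells_def by auto
        ultimately have gt: "y > y0" by auto
        then have "(x0, y) \<in> cells la" using y cnu d by auto
        then have "x0 \<le> prow la y" unfolding cells_def by auto
        also have "\<dots> \<le> prow la y0" using prow_antitone[OF assms(1) dcell(2)] gt by auto
        finally have "(x0, y0) \<in> cells la" using dcell unfolding cells_def by auto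
        then show False using dnot d by simp
      qed
    qed
    then have "card {y. (x0, y) \<in> cells nu} \<le> card {1..y0}" by (intro card_mono) auto
    then have "pcol nu x0 \<le> y0" using pcol_card[OF dcell(1), of nu] by simp
    then show ?thesis unfolding leg_def d by simp
  qed
  have hook_eq: "hook nu c = hook la c" if "c \<in> cells la - (Rset la nu \<union> Cset la nu)" for c
    using that arm_eq leg_eq unfolding hook_def R C by auto
  have hook_d: "hook nu d = 1" unfolding hook_def using arm_d leg_d by simp
  have hpos: "hook nu c > 0" for c unfolding hook_def by simp
  define f where "f c = real (hook la c) / real (hook nu c)" for c
  have "real (hook_prod nu) = (\<Prod>c\<in>cells la. real (hook nu c))"
    unfolding hook_prod_def nuD using fin dnot hook_d by simp
  then have "real (hook_prod la) / real (hook_prod nu) = (\<Prod>c\<in>cells la. f c)"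
    unfolding hook_prod_def f_def by (simp add: prod_dividef)
  also have "\<dots> = (\<Prod>c\<in>Rset la nu \<union> Cset la nu. f c)"
  proof -
    have sub: "Rset la nu \<union> Cset la nu \<subseteq> cells la" unfolding R C by auto
    have one: "\<forall>i\<in>cells la - (Rset la nu \<union> Cset la nu). f i = 1"
    proof
      fix i assume i: "i \<in> cells la - (Rset la nu \<union> Cset la nu)"
      have "hook la i = hook nu i" using hook_eq[OF i] by simp
      then show "f i = 1" unfolding f_def by (simp add: hook_def)
    qed
    show ?thesis using prod.mono_neutral_right[OF fin sub one] by simp
  qed
  also have "\<dots> = (\<Prod>c\<in>Rset la nu. f c) * (\<Prod>c\<in>Cset la nu. f c)"
    by (rule prod.union_disjoint[OF finR disj])
  finally have L: "real (hook_prod la) / real (hook_prod nu) = (\<Prod>c\<in>Rset la nu. f c) * (\<Prod>c\<in>Cset la nu. f c)" .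
  define F where "F q c = (1 - q ^ hook la c) / (1 - q ^ hook nu c)" for q :: real and c
  have A: "alpha la nu q q = (\<Prod>c\<in>Rset la nu. F q c) * (\<Prod>c\<in>Cset la nu. F q c)" for q
    unfolding alpha_def F_def hook_def by (simp add: brkqq)
  have B: "alphabar la nu q q = (\<Prod>c\<in>Rset la nu. F q c) * (\<Prod>c\<in>Cset la nu. F q c)" for q
    unfolding alphabar_def F_def hook_def by (simp add: brkqq)
  have FL: "((\<lambda>q. F q c) \<longlongrightarrow> f c) (at 1)" for c
    unfolding F_def f_def by (rule ratio_lim[OF hpos])
  have "((\<lambda>q. (\<Prod>c\<in>Rset la nu. F q c) * (\<Prod>c\<in>Cset la nu. F q c)) \<longlongrightarrow>
      (\<Prod>c\<in>Rset la nu. f c) * (\<Prod>c\<in>Cset la nu. f c)) (at 1)"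
    by (intro tendsto_mult tendsto_prod FL)
  then show ?thesis unfolding A B L by simp
qed

end
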